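(* Fix $0<m<2M$. For $s_1,s_2\in\{+,-\}$ and $\xi_1,\xi_2\in\mathbb{R}^3$ define \[ \mu^{s_1,s_2}(\xi_1,\xi_2):=\langle\xi_1-\xi_2\rangle_m+s_1\langle\xi_1\rangle_M-s_2\langle\xi_2\rangle_M . \] There is a (sufficiently small) absolute constant $c>0$ such that the following hold, with implicit constants depending only on $m,M$ (and $c$). Case 1: If (a) $s_1=+,s_2=-$, or (b) $s_1=-,s_2=+$ and $\langle\xi_1-\xi_2\rangle_m\le c\min(\langle\xi_1\rangle_M,\langle\xi_2\rangle_M)$, then \[ |\mu^{s_1,s_2}(\xi_1,\xi_2)|\gtrsim \max(\langle\xi_1-\xi_2\rangle,\langle\xi_1\rangle,\langle\xi_2\rangle). \] Case 2: If (a) $s_1=s_2$, or (b) $s_1=-,s_2=+$ and $\langle\xi_1-\xi_2\rangle_m> c\min(\langle\xi_1\rangle_M,\langle\xi_2\rangle_M)$, then \[ |\mu^{s_1,s_2}(\xi_1,\xi_2)|\gtrsim \frac{\langle\xi_1\rangle\langle\xi_2\rangle}{\langle\xi_1-\xi_2\rangle}\,\angle(s_1\xi_1,s_2\xi_2)^2 . \] For every choice of signs $s_1,s_2$ one has both \[ |\mu^{s_1,s_2}(\xi_1,\xi_2)|\gtrsim \min(\langle\xi_1\rangle,\langle\xi_2\rangle)\,\angle(s_1\xi_1,s_2\xi_2)^2 \] and \[ |\mu^{s_1,s_2}(\xi_1,\xi_2)|\gtrsim \max(\langle\xi_1-\xi_2\rangle^{-1},\langle\xi_1\rangle^{-1},\langle\xi_2\rangle^{-1}).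 \]
   Context: For $a\ge0$, $\langle\xi\rangle_a:=(a^2+|\xi|^2)^{1/2}$ and $\langle\xi\rangle:=\langle\xi\rangle_1$. For nonzero vectors $x,y\in\mathbb{R}^3$, $\angle(x,y)\in[0,\pi]$ denotes the angle between $x$ and $y$. $A\gtrsim B$ means $A\ge C^{-1}B$ for a constant $C>0$ (here depending only on $m,M$). *)

theory Defs
  imports "HOL-Analysis.Analysis"
begin

text \<open>Japanese bracket: jb a xi = (a^2 + |xi|^2)^(1/2); jb 1 xi is the plain bracket.\<close>
definition jb :: "real \<Rightarrow> real^3 \<Rightarrow> real" where
  "jb a \<xi> = sqrt (a\<^sup>2 + (norm \<xi>)\<^sup>2)"

definition vangle :: "real^3 \<Rightarrow> real^3 \<Rightarrow> real" where
  "vangle x y = arccos ((x \<bullet> y) / (norm x * norm y))"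

text \<open>Phase function; signs s1, s2 are encoded as reals in {1, -1}.\<close>
definition mu :: "real \<Rightarrow> real \<Rightarrow> real \<Rightarrow> real \<Rightarrow> real^3 \<Rightarrow> real^3 \<Rightarrow> real" where
  "mu m M s1 s2 \<xi>1 \<xi>2 = jb m (\<xi>1 - \<xi>2) + s1 * jb M \<xi>1 - s2 * jb M \<xi>2"

end

theory Submission
  imports Defs
begin

lemma one_minus_cos_le: fixes x::real assumes "x \<ge> 0" shows "1 - cos x \<le> x^2/2"
proof -
  let ?f = "\<lambda>x. x^2/2 - 1 + cos x"
  have "\<And>u. \<lbrakk>0 \<le> u; u \<le> x\<rbrakk> \<Longrightarrow> (?f has_real_derivative u - sin u) (at u)"
    by (auto intro!: derivative_eq_intros simp: field_simps)
  moreover have "\<And>u. \<lbrakk>0 \<le> u; u \<le> x\<rbrakk> \<Longrightarrow> u - sin u \<ge> 0" using sin_x_le_x by auto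
  ultimately have "\<And>u. \<lbrakk>0 \<le> u; u \<le> x\<rbrakk> \<Longrightarrow> \<exists>y. (?f has_real_derivative y) (at u) \<and> y \<ge> 0"
    by blast
  then have "?f 0 \<le> ?f x"
    by (rule DERIV_nonneg_imp_nondecreasing [OF assms])
  then show ?thesis by simp
qed

lemma sin_ge_cubic: fixes x::real assumes "x \<ge> 0" shows "x - x^3/6 \<le> sin x"
proof -
  let ?f = "\<lambda>x. sin x - x + x^3/6"
  have "\<And>u. \<lbrakk>0 \<le> u; u \<le> x\<rbrakk> \<Longrightarrow> (?f has_real_derivative cos u - 1 + u^2/2) (at u)"
    by (auto intro!: derivative_eq_intros simp: field_simps power2_eq_square power3_eq_cube)
  moreover have "\<And>u. \<lbrakk>0 \<le> u; u \<le> x\<rbrakk> \<Longrightarrow> cos u - 1 + u^2/2 \<ge> 0" using one_minus_cos_le by force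
  ultimately have "\<And>u. \<lbrakk>0 \<le> u; u \<le> x\<rbrakk> \<Longrightarrow> \<exists>y. (?f has_real_derivative y) (at u) \<and> y \<ge> 0"
    by blast
  then have "?f 0 \<le> ?f x"
    by (rule DERIV_nonneg_imp_nondecreasing [OF assms])
  then show ?thesis by simp
qed

lemma arccos_sq_le: fixes t::real assumes "-1 \<le> t" "t \<le> 1" shows "(arccos t)^2 \<le> 18 * (1 - t)"
proof -
  define th where "th = arccos t"
  have b: "0 \<le> th" "th \<le> pi" using arccos_bounded[OF assms] th_def by auto
  have ct: "cos th = t" using cos_arccos[OF assms] th_def by simp
  define y where "y = th/2"
  have y0: "0 \<le> y" and y2: "y \<le> 2" using b pi_less_4 y_def by auto
  have ty: "2*y = th" using y_def by simp
  have c: "cos th = 1 - 2 * sin y ^ 2" using cos_double_sin[of y] unfolding ty .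
  have s: "y - y^3/6 \<le> sin y" using sin_ge_cubic y0 by simp
  have yy: "y*y \<le> 4" using mult_mono[of y 2 y 2] y0 y2 by simp
  have "y*(y*y) \<le> y*4" using mult_left_mono[OF yy y0] .
  then have "y^3/6 \<le> y * 4/6" by (simp add: power3_eq_cube)
  then have "y/3 \<le> sin y" using s by simp
  then have "(y/3)^2 \<le> (sin y)^2" using y0 by (intro power_mono) auto
  then have "th^2 \<le> 18 * (1 - cos th)" using c y_def by (simp add: power2_eq_square field_simps)
  then show ?thesis using ct th_def by simp
qed

lemma sqrt_facts: fixes N x :: real assumes "0 \<le> N" "0 \<le> x"
  shows "(sqrt(N^2+x^2))^2 = N^2+x^2" "N \<le> sqrt(N^2+x^2)" "x \<le> sqrt(N^2+x^2)" "sqrt(N^2+x^2) \<le> N + x"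
proof -
  show "(sqrt(N^2+x^2))^2 = N^2+x^2" by simp
  show "N \<le> sqrt(N^2+x^2)" by (rule real_le_rsqrt) simp
  show "x \<le> sqrt(N^2+x^2)" by (rule real_le_rsqrt) simp
  have "sqrt(N^2+x^2) \<le> sqrt((N+x)^2)" by (rule real_sqrt_le_mono) (use assms in \<open>simp add: power2_eq_square algebra_simps\<close>)
  then show "sqrt(N^2+x^2) \<le> N + x" using assms by simp
qed

definition k0 :: "real \<Rightarrow> real \<Rightarrow> real" where "k0 m M = min 1 (min m M)"
definition KK :: "real \<Rightarrow> real \<Rightarrow> real" where "KK m M = 1 + m + M"
definition eps :: "real \<Rightarrow> real \<Rightarrow> real" where "eps m M = min ((4*M^2 - m^2)/8) (M^2/4)"

locale R =
  fixes m M a b p d A B D ea eb ed :: real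
  assumes m0: "0 < m" and mM: "m < 2*M" and a0: "0 \<le> a" and b0: "0 \<le> b" and d0: "0 \<le> d"
  and dsq: "d^2 = a^2 + b^2 - 2*p" and pab: "\<bar>p\<bar> \<le> a*b"
  and A_def: "A = sqrt(M^2+a^2)" and B_def: "B = sqrt(M^2+b^2)" and D_def: "D = sqrt(m^2+d^2)"
  and ea_def: "ea = sqrt(1+a^2)" and eb_def: "eb = sqrt(1+b^2)" and ed_def: "ed = sqrt(1+d^2)"
begin

lemma M0: "0 < M" using m0 mM by linarith

lemma Af: "A^2 = M^2+a^2" "M \<le> A" "a \<le> A" "A \<le> M + a"
  using sqrt_facts[of M a] M0 a0 A_def by auto
lemma Bf: "B^2 = M^2+b^2" "M \<le> B" "b \<le> B" "B \<le> M + b"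
  using sqrt_facts[of M b] M0 b0 B_def by auto
lemma Df: "D^2 = m^2+d^2" "m \<le> D" "d \<le> D" "D \<le> m + d"
  using sqrt_facts[of m d] m0 d0 D_def by auto
lemma eaf: "ea^2 = 1+a^2" "1 \<le> ea" "a \<le> ea" "ea \<le> 1 + a"
  using sqrt_facts[of 1 a] a0 ea_def by auto
lemma ebf: "eb^2 = 1+b^2" "1 \<le> eb" "b \<le> eb" "eb \<le> 1 + b"
  using sqrt_facts[of 1 b] b0 eb_def by auto
lemma edf: "ed^2 = 1+d^2" "1 \<le> ed" "d \<le> ed" "ed \<le> 1 + d"
  using sqrt_facts[of 1 d] d0 ed_def by auto

lemma pab2: "p \<le> a*b" "-p \<le> a*b" using pab by auto

lemma dtri: "a - b \<le> d" "b - a \<le> d" "d \<le> a + b"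
proof -
  have "\<bar>a-b\<bar>^2 \<le> d^2" using dsq pab2 by (simp add: power2_eq_square algebra_simps)
  then have "\<bar>a-b\<bar> \<le> d" using power2_le_imp_le d0 by blast
  then show "a - b \<le> d" "b - a \<le> d" by auto
  have "d^2 \<le> (a+b)^2" using dsq pab2 by (simp add: power2_eq_square algebra_simps)
  then show "d \<le> a + b" using power2_le_imp_le a0 b0 by fastforce
qed

lemma kf: "0 < k0 m M" "k0 m M \<le> 1" "k0 m M \<le> m" "k0 m M \<le> M"
  using m0 M0 by (auto simp: k0_def)
lemma Kf: "1 \<le> KK m M" "M + 1 \<le> KK m M" "m + 1 \<le> KK m M" using m0 M0 by (auto simp: KK_def)

lemma lohi_gen: fixes X N x e k K :: real
  assumes "N \<le> X" "x \<le> X" "X \<le> N + x" "1 \<le> e" "x \<le> e" "e \<le> 1 + x" "0 \<le> x"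
    "0 < k" "k \<le> 1" "k \<le> N" "N + 1 \<le> K" "0 \<le> N"
  shows "k * e \<le> 2 * X" "X \<le> K * e"
proof -
  have "k*e \<le> k*(1+x)" using assms by (intro mult_left_mono) auto
  moreover have "k*x \<le> x" using assms mult_right_mono[of k 1 x] by auto
  ultimately show "k * e \<le> 2 * X" using assms by (simp add: distrib_left)
  have "N \<le> N*e" using assms mult_left_mono[of 1 e N] by auto
  moreover have "(N+1)*e \<le> K*e" using assms by (intro mult_right_mono) auto
  moreover have "(N+1)*e = N*e + e" by (simp add: distrib_right)
  ultimately show "X \<le> K * e" using assms by linarith
qed

lemma Alh: "k0 m M * ea \<le> 2*A" "A \<le> KK m M * ea"
  using lohi_gen[OF Af(2,3,4) eaf(2,3,4) a0 kf(1,2,4) Kf(2)] M0 by auto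
lemma Blh: "k0 m M * eb \<le> 2*B" "B \<le> KK m M * eb"
  using lohi_gen[OF Bf(2,3,4) ebf(2,3,4) b0 kf(1,2,4) Kf(2)] M0 by auto
lemma Dlh: "k0 m M * ed \<le> 2*D" "D \<le> KK m M * ed"
  using lohi_gen[OF Df(2,3,4) edf(2,3,4) d0 kf(1,2,3) Kf(3)] m0 by auto

lemma pos: "0 < A" "0 < B" "0 < D" "0 < ea" "0 < eb" "0 < ed"
  using Af Bf Df eaf ebf edf M0 m0 by auto

lemma eps_pos: "0 < eps m M"
proof -
  have "m*m < (2*M)*(2*M)" using mult_strict_mono[OF mM mM] m0 M0 by simp
  then show ?thesis using M0 by (simp add: eps_def power2_eq_square)
qed

lemma f_id: "(A*B - a*b - M^2) * (2*(A*B + a*b)) = M^2 * ((A-B)^2 + (a-b)^2)"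
  using Af(1) Bf(1) by algebra

lemma ab_le: "a*b \<le> A*B" using mult_mono[OF Af(3) Bf(3)] a0 b0 pos by auto

lemma f_ge0: "0 \<le> A*B - a*b - M^2"
proof -
  have "0 \<le> (A*B - a*b - M^2) * (2*(A*B + a*b))" unfolding f_id by simp
  moreover have "0 < 2*(A*B + a*b)" using pos a0 b0 by (simp add: add_pos_nonneg)
  ultimately show ?thesis by (simp add: zero_le_mult_iff)
qed

lemma f_bd: "M^2*(A-B)^2 \<le> (A*B - a*b - M^2) * (4*(A*B))"
proof -
  have "(A*B - a*b - M^2) * (2*(A*B + a*b)) \<le> (A*B - a*b - M^2) * (4*(A*B))"
    using f_ge0 ab_le by (intro mult_left_mono) auto
  moreover have "M^2*(A-B)^2 \<le> M^2 * ((A-B)^2 + (a-b)^2)" by (intro mult_left_mono) auto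
  ultimately show ?thesis unfolding f_id by linarith
qed

lemma Phi: "(A+B)^2 - D^2 = (4*M^2 - m^2) + 2*(A*B - a*b - M^2) + 2*(a*b+p)"
  using Af(1) Bf(1) Df(1) dsq by algebra

lemma g_pos: "0 < 4*M^2 - m^2" using eps_pos by (simp add: eps_def)

lemma D_lt: "D < A + B"
proof -
  have "0 < 4*M^2 - m^2 + 2*(A*B - a*b - M^2) + 2*(a*b+p)" using g_pos f_ge0 pab2 by (smt (verit))
  then have "0 < (A+B)^2 - D^2" unfolding Phi .
  then have "D^2 < (A+B)^2" by simp
  then show ?thesis using power2_less_imp_less pos by (metis add_pos_pos less_le)
qed

lemma mp_prod: "(A+B-D)*(A+B+D) = (A+B)^2 - D^2" by (simp add: power2_eq_square algebra_simps)

lemma mp_up: "(A+B)^2 - D^2 \<le> (A+B-D)*(2*(A+B))"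
proof -
  have "(A+B-D)*(A+B+D) \<le> (A+B-D)*(2*(A+B))" using D_lt by (intro mult_left_mono) auto
  then show ?thesis using mp_prod by simp
qed

lemma mp_LB1: "a*b + p \<le> (A+B-D)*(A+B)"
  using mp_up Phi g_pos f_ge0 by (simp add: algebra_simps)

lemma mp_LB2: "eps m M*(A+B) \<le> (A+B-D)*(A*B)"
proof -
  define u where "u = A+B-D"
  define e where "e = eps m M"
  define g where "g = 4*M^2 - m^2"
  define f where "f = A*B - a*b - M^2"
  have u0: "0 \<le> u" using D_lt u_def by simp
  have "e \<le> g/8" unfolding e_def g_def eps_def by (rule min.cobounded1)
  moreover have "e \<le> M^2/4" unfolding e_def g_def eps_def by (rule min.cobounded2)
  ultimately have e1: "8*e \<le> g" "4*e \<le> M^2" by linarith+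
  have h1: "((A+B)^2 - D^2) * (2*(A*B)) \<le> u*(2*(A+B))*(2*(A*B))"
    using mp_up pos u_def by (intro mult_right_mono) auto
  have h2: "((A+B)^2 - D^2) = g + 2*f + 2*(a*b+p)" using Phi f_def g_def by simp
  have h3: "M^2*(A-B)^2 \<le> f * (4*(A*B))" using f_bd f_def by simp
  have h4: "0 \<le> (a*b+p)*(A*B)" using pab2 pos by simp
  have h5: "8*e*(A*B) \<le> g*(A*B)" using e1 pos by (intro mult_right_mono) auto
  have h6: "4*e*(A-B)^2 \<le> M^2*(A-B)^2" using e1 by (intro mult_right_mono) auto
  have "((A+B)^2 - D^2) * (2*(A*B)) = 2*g*(A*B) + f*(4*(A*B)) + 4*((a*b+p)*(A*B))"
    unfolding h2 by (simp add: algebra_simps)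
  then have "4*e*(A+B)^2 \<le> u*(2*(A+B))*(2*(A*B))"
    using h1 h3 h4 h5 h6 by (simp add: power2_eq_square algebra_simps)
  then have "(A+B)*(e*(A+B)) \<le> (A+B)*(u*(A*B))" by (simp add: power2_eq_square algebra_simps)
  then have "e*(A+B) \<le> u*(A*B)" using pos by (simp add: mult_le_cancel_left_pos add_pos_pos)
  then show ?thesis by (simp add: u_def e_def)
qed

lemma mp_LB3: "eps m M \<le> (A+B-D)*A" "eps m M \<le> (A+B-D)*B"
proof -
  have e: "0 < eps m M" using eps_pos .
  have x3: "0 \<le> A*eps m M" "0 \<le> B*eps m M" using e pos by auto
  have "B*(eps m M) \<le> eps m M*(A+B)" using x3 by (simp add: algebra_simps)
  also have "\<dots> \<le> (A+B-D)*(A*B)" by (rule mp_LB2)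
  also have "\<dots> = B*((A+B-D)*A)" by (simp add: algebra_simps)
  finally show "eps m M \<le> (A+B-D)*A" using pos by (simp add: mult_le_cancel_left_pos)
  have "A*(eps m M) \<le> eps m M*(A+B)" using x3 by (simp add: algebra_simps)
  also have "\<dots> \<le> (A+B-D)*(A*B)" by (rule mp_LB2)
  also have "\<dots> = A*((A+B-D)*B)" by (simp add: algebra_simps)
  finally show "eps m M \<le> (A+B-D)*B" using pos by (simp add: mult_le_cancel_left_pos)
qed

end

lemma scale_aux: fixes X Y c r q :: real
  assumes "0 \<le> X" "0 < q" "r*X \<le> q*Y" "c \<le> r/q" shows "c*X \<le> Y"
proof -
  have "c*X \<le> (r/q)*X" using assms by (intro mult_right_mono) auto
  also have "\<dots> = (r*X)/q" by simp
  also have "\<dots> \<le> Y" using assms by (simp add: pos_divide_le_eq mult.commute)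
  finally show ?thesis .
qed

context R begin

lemma AB_mono: "b \<le> a \<Longrightarrow> B \<le> A"
proof -
  assume "b \<le> a"
  then have "B^2 \<le> A^2" using Af(1) Bf(1) b0 by (simp add: power_mono)
  then show "B \<le> A" using power2_le_imp_le pos by (metis less_le)
qed

lemma AB_mono2: "a \<le> b \<Longrightarrow> A \<le> B"
proof -
  assume "a \<le> b"
  then have "A^2 \<le> B^2" using Af(1) Bf(1) a0 by (simp add: power_mono)
  then show "A \<le> B" using power2_le_imp_le pos by (metis less_le)
qed

lemma mp_Q:
  assumes ba: "b \<le> a" and BD: "B < 2*D" and a1: "0 < a" and b1: "0 < b"
  shows "min 1 (eps m M) * k0 m M * (ea*eb*(a*b+p)) \<le> 48*KK m M*(M+1) * (a*b*ed*(A+B-D))"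
proof -
  define u where "u = A+B-D"
  define k where "k = k0 m M"
  define K where "K = KK m M"
  define e where "e = eps m M"
  define P where "P = a*b+p"
  have u0: "0 \<le> u" using D_lt u_def by simp
  have P0: "0 \<le> P" using pab2 P_def by simp
  have k0': "0 < k" "k \<le> 1" using kf k_def by auto
  have K1: "1 \<le> K" "M + 1 \<le> K" using Kf K_def by auto
  have e0: "0 < e" using eps_pos e_def by simp
  have h1: "k*ea \<le> 12*K*ed"
  proof (cases "2*b \<le> a")
    case True
    then have "ea \<le> 3*ed" using eaf(4) dtri(1) edf(2,3) by linarith
    moreover have "k*ea \<le> ea" using k0' eaf(2) mult_right_mono[of k 1 ea] by auto
    moreover have "3*ed \<le> 12*K*ed" using K1 edf(2) by simp
    ultimately show ?thesis by linarith
  next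
    case False
    then have "A \<le> 3*B" using Af(4) Bf(2,3) by linarith
    then have "A \<le> 6*D" using BD by linarith
    moreover have "D \<le> K*ed" using Dlh(2) K_def by simp
    ultimately have "k*ea \<le> 12*(K*ed)" using Alh(1) unfolding k_def by linarith
    then show ?thesis by (simp add: mult.assoc)
  qed
  have BA: "B \<le> A" using AB_mono ba by simp
  show ?thesis
  proof (cases "1 \<le> b")
    case True
    have h2: "eb \<le> 2*b" using ebf(4) True by linarith
    have "P \<le> u*(A+B)" using mp_LB1 u_def P_def by simp
    also have "\<dots> \<le> u*(2*((M+1)*a))"
    proof (rule mult_left_mono[OF _ u0])
      have "M \<le> M*a" using M0 True ba mult_left_mono[of 1 a M] by simp
      then show "A + B \<le> 2*((M+1)*a)" using BA Af(4) by (simp add: algebra_simps)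
    qed
    finally have h3: "P \<le> u*(2*((M+1)*a))" .
    have "(k*ea)*eb \<le> (12*K*ed)*(2*b)"
      by (rule mult_mono[OF h1 h2]) (use K1 pos in auto)
    then have "(k*ea)*eb*P \<le> (12*K*ed)*(2*b)*(u*(2*((M+1)*a)))"
      by (rule mult_mono[OF _ h3]) (use K1 pos b0 P0 in auto)
    moreover have "min 1 e * k * (ea*eb*P) \<le> k*ea*eb*P"
      using k0' pos P0 e0 mult_right_mono[of "min 1 e" 1 "k*ea*eb*P"] by (simp add: mult.assoc)
    ultimately show ?thesis by (simp add: k_def K_def e_def u_def P_def algebra_simps)
  next
    case False
    have h2: "eb \<le> 2" using ebf(4) False by linarith
    have h3: "P \<le> 2*(a*b)" using pab2 P_def by simp
    have "(k*ea)*eb \<le> (12*K*ed)*2"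
      by (rule mult_mono[OF h1 h2]) (use K1 pos in auto)
    then have "(k*ea)*eb*P \<le> (12*K*ed)*2*(2*(a*b))"
      by (rule mult_mono[OF _ h3]) (use K1 pos P0 in auto)
    then have x: "k*ea*eb*P \<le> 48*K*(a*b*ed)" by (simp add: algebra_simps)
    have "e \<le> u*B" using mp_LB3 e_def u_def by simp
    also have "\<dots> \<le> u*(M+1)" using Bf(4) False u0 by (intro mult_left_mono) auto
    finally have y: "e \<le> u*(M+1)" .
    have z: "0 \<le> 48*K*(a*b*ed)" using K1 a0 b0 pos by simp
    have "min 1 e * k * (ea*eb*P) \<le> e * (k*ea*eb*P)"
      using k0' pos P0 e0 mult_right_mono[of "min 1 e" e "k*ea*eb*P"] by (simp add: algebra_simps)
    also have "\<dots> \<le> e * (48*K*(a*b*ed))" using x e0 by (intro mult_left_mono) auto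
    also have "\<dots> \<le> (u*(M+1)) * (48*K*(a*b*ed))" using y z by (intro mult_right_mono) auto
    finally show ?thesis by (simp add: k_def K_def e_def u_def P_def algebra_simps)
  qed
qed

lemma mp_I2:
  assumes BD: "B < 2*D"
  shows "eps m M \<le> (A+B-D) * (2*KK m M*ed)"
proof -
  have u0: "0 \<le> A+B-D" using D_lt by simp
  have "eps m M \<le> (A+B-D)*B" using mp_LB3 by simp
  also have "\<dots> \<le> (A+B-D)*(2*KK m M*ed)" using BD Dlh(2) u0 by (intro mult_left_mono) auto
  finally show ?thesis .
qed

lemma mp_I1: "eps m M \<le> (A+B-D) * (KK m M*ea)" "eps m M \<le> (A+B-D) * (KK m M*eb)"
proof -
  have u0: "0 \<le> A+B-D" using D_lt by simp
  have "eps m M \<le> (A+B-D)*A" using mp_LB3 by simp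
  also have "\<dots> \<le> (A+B-D)*(KK m M*ea)" using Alh(2) u0 by (intro mult_left_mono) auto
  finally show "eps m M \<le> (A+B-D) * (KK m M*ea)" .
  have "eps m M \<le> (A+B-D)*B" using mp_LB3 by simp
  also have "\<dots> \<le> (A+B-D)*(KK m M*eb)" using Blh(2) u0 by (intro mult_left_mono) auto
  finally show "eps m M \<le> (A+B-D) * (KK m M*eb)" .
qed

end

lemma lin4: fixes x1 x2 x3 x4 y1 y2 y3 :: real shows "x1 \<le> y1 \<Longrightarrow> x2 \<le> y2 \<Longrightarrow> x3 \<le> y1 \<Longrightarrow> x4 \<le> y3 \<Longrightarrow> 0 \<le> y2 \<Longrightarrow> 0 \<le> y3 \<Longrightarrow> x1+x2+x3+x4 \<le> 2*(y1+y3+y2)"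
  by (smt (verit))

context R begin

lemma Psi: "(D+A)^2 - B^2 = m^2 + 2*(a*b-p) + 2*(A*D - a*d) + 2*(a*(a-b+d))"
  using Af(1) Bf(1) Df(1) dsq by algebra

lemma ad_le: "a*d \<le> A*D" using mult_mono[OF Af(3) Df(3)] a0 d0 pos by auto

lemma pp_aux: "0 \<le> a*(a-b+d)" using a0 dtri by simp

lemma B_le: "B \<le> 2*A + D" using Bf(4) dtri Af(2,3) Df(3) by linarith

lemma pp_pos: "B < D + A"
proof -
  have "0 < m^2 + 2*(a*b-p) + 2*(A*D - a*d) + 2*(a*(a-b+d))"
    using m0 pab2 ad_le pp_aux by (smt (verit) zero_less_power)
  then have "0 < (D+A)^2 - B^2" unfolding Psi .
  then have "B^2 < (D+A)^2" by simp
  then show ?thesis using power2_less_imp_less pos by (metis add_pos_pos less_le)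
qed

lemma pp_up: "(D+A)^2 - B^2 \<le> (D+A-B)*(3*(A+D))"
proof -
  have "(D+A-B)*(D+A+B) \<le> (D+A-B)*(3*(A+D))" using pp_pos B_le pos by (intro mult_left_mono) auto
  moreover have "(D+A-B)*(D+A+B) = (D+A)^2 - B^2" by (simp add: power2_eq_square algebra_simps)
  ultimately show ?thesis by simp
qed

lemma N0: "(A*D - a*d)*(A*D + a*d) = M^2*m^2 + M^2*d^2 + a^2*m^2"
  using Af(1) Df(1) by algebra

lemma N0_ge: "(k0 m M)^2*(A^2+D^2) \<le> 2*(M^2*m^2 + M^2*d^2 + a^2*m^2)"
proof -
  define k where "k = k0 m M"
  have k2: "k^2 \<le> m^2" "k^2 \<le> M^2" using kf k_def by (auto intro: power_mono)
  have f1: "k^2*M^2 \<le> M^2*m^2" using mult_right_mono[OF k2(1), of "M^2"] by (simp add: mult.commute)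
  have f2: "k^2*a^2 \<le> a^2*m^2" using mult_right_mono[OF k2(1), of "a^2"] by (simp add: mult.commute)
  have f3: "k^2*m^2 \<le> M^2*m^2" using k2 by (intro mult_right_mono) auto
  have f4: "k^2*d^2 \<le> M^2*d^2" using k2 by (intro mult_right_mono) auto
  have f5: "0 \<le> a^2*m^2" "0 \<le> M^2*d^2" by auto
  have e: "k^2*(M^2+a^2+m^2+d^2) = k^2*M^2 + k^2*a^2 + k^2*m^2 + k^2*d^2" by (simp add: algebra_simps)
  have "k^2*(M^2+a^2+m^2+d^2) \<le> 2*(M^2*m^2 + M^2*d^2 + a^2*m^2)"
    unfolding e by (rule lin4[OF f1 f2 f3 f4 f5])
  then show ?thesis using Af(1) Df(1) k_def by (simp add: algebra_simps)
qed

lemma pp_G: "(k0 m M)^2*(A+D) \<le> (D+A-B)*(12*(A*D))"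
proof -
  define k where "k = k0 m M"
  define u where "u = D+A-B"
  define w where "w = A*D - a*d"
  have w0: "0 \<le> w" using ad_le w_def by simp
  have u0: "0 \<le> u" using pp_pos u_def by simp
  have "w*(A*D + a*d) \<le> w*(2*(A*D))" using w0 ad_le by (intro mult_left_mono) auto
  then have h1: "k^2*(A^2+D^2) \<le> 2*(w*(2*(A*D)))" using N0 N0_ge w_def k_def by simp
  have h2: "(A+D)^2 \<le> 2*(A^2+D^2)" using sum_squares_ge_zero[of "A-D" 0]
    by (simp add: power2_eq_square algebra_simps)
  have h2': "k^2*(A+D)^2 \<le> k^2*(2*(A^2+D^2))" using h2 by (intro mult_left_mono) auto
  have h3: "2*w \<le> (D+A)^2 - B^2" using Psi pab2 pp_aux w_def by (smt (verit) zero_le_power2)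
  have h4: "(2*w)*(4*(A*D)) \<le> ((D+A)^2 - B^2)*(4*(A*D))" using h3 pos by (intro mult_right_mono) auto
  have h5: "((D+A)^2 - B^2)*(4*(A*D)) \<le> (u*(3*(A+D)))*(4*(A*D))" using pp_up pos u_def by (intro mult_right_mono) auto
  have "k^2*(A+D)^2 \<le> (u*(3*(A+D)))*(4*(A*D))"
    using h1 h2' h4 h5 by (simp add: algebra_simps)
  then have "(A+D)*(k^2*(A+D)) \<le> (A+D)*(u*(12*(A*D)))" by (simp add: power2_eq_square algebra_simps)
  then have "k^2*(A+D) \<le> u*(12*(A*D))" using pos by (simp add: mult_le_cancel_left_pos add_pos_pos)
  then show ?thesis by (simp add: k_def u_def)
qed

lemma pp_G2: "(k0 m M)^2 \<le> (D+A-B)*(12*A)" "(k0 m M)^2 \<le> (D+A-B)*(12*D)"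
proof -
  have x3: "0 \<le> A*(k0 m M)^2" "0 \<le> D*(k0 m M)^2" using pos by auto
  have "D*(k0 m M)^2 \<le> (k0 m M)^2*(A+D)" using x3 by (simp add: algebra_simps)
  also have "\<dots> \<le> (D+A-B)*(12*(A*D))" by (rule pp_G)
  also have "\<dots> = D*((D+A-B)*(12*A))" by (simp add: algebra_simps)
  finally show "(k0 m M)^2 \<le> (D+A-B)*(12*A)" using pos by (simp add: mult_le_cancel_left_pos)
  have "A*(k0 m M)^2 \<le> (k0 m M)^2*(A+D)" using x3 by (simp add: algebra_simps)
  also have "\<dots> \<le> (D+A-B)*(12*(A*D))" by (rule pp_G)
  also have "\<dots> = A*((D+A-B)*(12*D))" by (simp add: algebra_simps)
  finally show "(k0 m M)^2 \<le> (D+A-B)*(12*D)" using pos by (simp add: mult_le_cancel_left_pos)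
qed

lemma pp_min: assumes "b \<le> a" shows "min A D \<le> 3*(D+A-B)"
proof -
  define u where "u = D+A-B"
  have a1: "0 \<le> a*(a-b)" using a0 assms by simp
  have a2: "a*(a-b+d) = a*(a-b) + a*d" by (simp add: algebra_simps)
  have a3: "0 \<le> m^2" by simp
  have "2*(A*D) \<le> (D+A)^2 - B^2" unfolding Psi a2 using pab2 a1 a3 by (smt (verit))
  then have h: "2*(A*D) \<le> u*(3*(A+D))" using pp_up u_def by simp
  have "min A D * (A+D) \<le> 2*(A*D)"
  proof (cases "A \<le> D")
    case True
    then have "A*A \<le> A*D" using pos by (intro mult_left_mono) auto
    moreover have "min A D = A" using True by simp
    ultimately show ?thesis by (simp add: algebra_simps)
  next
    case False
    then have "D*D \<le> A*D" using pos by (intro mult_right_mono) auto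
    moreover have "min A D = D" using False by simp
    ultimately show ?thesis by (simp add: algebra_simps)
  qed
  then have "(A+D)*min A D \<le> (A+D)*(3*u)" using h by (simp add: algebra_simps)
  then show ?thesis using pos u_def by (simp add: mult_le_cancel_left_pos add_pos_pos)
qed

definition cPP :: "real \<Rightarrow> real \<Rightarrow> real" where
  "cPP m' M' = min (min (m'/(3*(2*m'+12))) ((k0 m' M')^2/(72*KK m' M')))
                  (min (1/4) ((k0 m' M')^2/(144*(M'+1))))"

end

context R begin

lemma P2: "2*(a*b-p) \<le> d^2" "a*b - p \<le> 2*(a*b)" "0 \<le> a*b - p"
proof -
  have "d^2 = (a-b)^2 + 2*(a*b-p)" using dsq by (simp add: power2_eq_square algebra_simps)
  then show "2*(a*b-p) \<le> d^2" by simp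
  show "a*b - p \<le> 2*(a*b)" "0 \<le> a*b - p" using pab2 by auto
qed

lemma pp_Q1:
  assumes ba: "b \<le> a"
  shows "min (m/(3*(2*m+12))) ((k0 m M)^2/(72*KK m M)) * (ea*eb*(a*b-p)) \<le> a*b*ed*(D+A-B)"
proof -
  define u where "u = D+A-B"
  define k where "k = k0 m M"
  define K where "K = KK m M"
  define P where "P = a*b-p"
  define X where "X = ea*eb*P"
  have P0: "0 \<le> P" "P \<le> 2*(a*b)" "2*P \<le> d^2" using P2 P_def by auto
  have X0: "0 \<le> X" using X_def P0 pos by simp
  have k0': "0 < k" "k \<le> 1" using kf k_def by auto
  have K1: "1 \<le> K" "M + 1 \<le> K" using Kf K_def by auto
  have ab0: "0 \<le> a*b" using a0 b0 by simp
  have mu3: "min A D \<le> 3*u" using pp_min[OF ba] u_def by simp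
  have A1: "m*X \<le> (2*m+12)*(a*b*ed*D)"
  proof (cases "1 \<le> a \<and> 1 \<le> b")
    case True
    have "X \<le> (2*a)*(2*b)*P" unfolding X_def using eaf(4) ebf(4) True P0 pos
      by (intro mult_mono) auto
    also have "\<dots> = 2*(a*b)*(2*P)" by (simp add: algebra_simps)
    also have "\<dots> \<le> 2*(a*b)*(d*d)" using P0 ab0 by (intro mult_left_mono) (auto simp: power2_eq_square)
    also have "\<dots> \<le> 2*(a*b)*(ed*D)" using edf(3) Df(3) d0 ab0 pos by (intro mult_left_mono mult_mono) auto
    finally have "X \<le> 2*(a*b*ed*D)" by (simp add: algebra_simps)
    then have "m*X \<le> m*(2*(a*b*ed*D))" using m0 by (intro mult_left_mono) auto
    moreover have "0 \<le> a*b*ed*D" using ab0 pos by simp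
    ultimately show ?thesis by (simp add: algebra_simps)
  next
    case False
    have "ea*eb \<le> 6*ed"
    proof (cases "b < 1")
      case True
      have "ea \<le> 3*ed" using eaf(4) dtri(1) True edf(2,3) by linarith
      moreover have "eb \<le> 2" using ebf(4) True by linarith
      ultimately have "ea*eb \<le> (3*ed)*2" using pos by (intro mult_mono) auto
      then show ?thesis by simp
    next
      case f2: False
      then have T: "a < 1" using False by auto
      have "eb \<le> 3*ed" using ebf(4) dtri(2) T edf(2,3) by linarith
      moreover have "ea \<le> 2" using eaf(4) T by linarith
      ultimately have "ea*eb \<le> 2*(3*ed)" using pos by (intro mult_mono) auto
      then show ?thesis by simp
    qed
    then have "X \<le> (6*ed)*(2*(a*b))" unfolding X_def by (rule mult_mono[OF _ P0(2)]) (use P0 pos in auto)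
    then have "m*X \<le> m*(12*(a*b*ed))" using m0 by (simp add: algebra_simps)
    also have "\<dots> \<le> D*(12*(a*b*ed))" using Df(2) ab0 pos by (intro mult_right_mono) auto
    also have "\<dots> \<le> (2*m+12)*(a*b*ed*D)"
    proof -
      have "0 \<le> m*(a*b*ed*D)" using m0 ab0 pos by simp
      then show ?thesis by (simp add: algebra_simps)
    qed
    finally show ?thesis .
  qed
  show ?thesis
  proof (cases "D \<le> A")
    case True
    then have "D \<le> 3*u" using mu3 min.absorb2[OF True] by simp
    then have "(2*m+12)*(a*b*ed*D) \<le> (2*m+12)*(a*b*ed*(3*u))" using m0 ab0 pos
      by (intro mult_left_mono) auto
    then have hX: "m*X \<le> (3*(2*m+12))*(a*b*ed*u)" using A1 by (simp add: algebra_simps)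
    have "(m/(3*(2*m+12))) * X \<le> a*b*ed*u" by (rule scale_aux[OF X0 _ hX order.refl]) (use m0 in simp)
    moreover have "min (m/(3*(2*m+12))) (k^2/(72*K)) * X \<le> (m/(3*(2*m+12))) * X"
      using mult_right_mono[OF min.cobounded1 X0] .
    ultimately show ?thesis by (simp add: X_def P_def u_def k_def K_def)
  next
    case False
    then have A3: "A \<le> 3*u" using mu3 min.absorb1[of A D] by simp
    have "k*eb \<le> 6*(K*ed)" using Blh(1) B_le False Dlh(2) unfolding k_def K_def by linarith
    moreover have "k*ea \<le> 2*A" using Alh(1) k_def by simp
    ultimately have "(k*ea)*(k*eb) \<le> (2*A)*(6*(K*ed))"
      by (intro mult_mono[of "k*ea" "2*A" "k*eb" "6*(K*ed)"]) (use pos k0' in auto)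
    then have "(k*ea)*(k*eb)*P \<le> (2*A)*(6*(K*ed))*(2*(a*b))"
      by (rule mult_mono[OF _ P0(2)]) (use pos K1 P0 in auto)
    also have "\<dots> \<le> (2*(3*u))*(6*(K*ed))*(2*(a*b))" using A3 K1 pos ab0
      by (intro mult_right_mono) auto
    finally have hX: "k^2 * X \<le> (72*K)*(a*b*ed*u)" unfolding X_def by (simp add: power2_eq_square algebra_simps)
    have "(k^2/(72*K)) * X \<le> a*b*ed*u" by (rule scale_aux[OF X0 _ hX order.refl]) (use K1 in simp)
    moreover have "min (m/(3*(2*m+12))) (k^2/(72*K)) * X \<le> (k^2/(72*K)) * X"
      using mult_right_mono[OF min.cobounded2 X0] .
    ultimately show ?thesis by (simp add: X_def P_def u_def k_def K_def)
  qed
qed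

lemma BA_le: assumes "a \<le> b" shows "B - A \<le> b - a"
proof -
  have "(B-A)*(B+A) = (b-a)*(b+a)" using Af(1) Bf(1) by algebra
  also have "\<dots> \<le> (b-a)*(B+A)" using assms Af(3) Bf(3) by (intro mult_left_mono) auto
  finally have "(B+A)*(B-A) \<le> (B+A)*(b-a)" by (simp add: algebra_simps)
  then show ?thesis using pos by (simp add: mult_le_cancel_left_pos add_pos_pos)
qed

lemma pp_Q2:
  assumes ab: "a \<le> b"
  shows "min (1/4) ((k0 m M)^2/(144*(M+1))) * (ea*eb*(a*b-p)) \<le> a*b*ed*(D+A-B)"
proof -
  define u where "u = D+A-B"
  define k where "k = k0 m M"
  define P where "P = a*b-p"
  define X where "X = ea*eb*P"
  have P0: "0 \<le> P" "P \<le> 2*(a*b)" using P2 P_def by auto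
  have X0: "0 \<le> X" using X_def P0 pos by simp
  have ab0: "0 \<le> a*b" using a0 b0 by simp
  have u1: "d - (b-a) \<le> u" using BA_le[OF ab] Df(3) u_def by linarith
  have "(d - (b-a))*(d + (b-a)) = 2*P" using dsq P_def by (simp add: power2_eq_square algebra_simps)
  moreover have "(d - (b-a))*(d + (b-a)) \<le> (d - (b-a))*(2*d)" using dtri by (intro mult_left_mono) auto
  ultimately have "P \<le> (d - (b-a))*d" by simp
  also have "\<dots> \<le> u*ed" using u1 edf(3) d0 dtri by (intro mult_mono) auto
  finally have Pu: "P \<le> u*ed" .
  show ?thesis
  proof (cases "1 \<le> a")
    case True
    have "X \<le> (2*a)*(2*b)*(u*ed)" unfolding X_def using eaf(4) ebf(4) True ab Pu P0 pos
      by (intro mult_mono) auto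
    then have hX: "1 * X \<le> 4*(a*b*ed*u)" by (simp add: algebra_simps)
    have "(1/4)*X \<le> a*b*ed*u" by (rule scale_aux[OF X0 _ hX order.refl]) simp
    moreover have "min (1/4) (k^2/(144*(M+1))) * X \<le> (1/4) * X"
      using mult_right_mono[OF min.cobounded1 X0] .
    ultimately show ?thesis by (simp add: X_def P_def u_def k_def)
  next
    case False
    have "eb \<le> 3*ed" using ebf(4) dtri(2) False edf(2,3) by linarith
    moreover have "ea \<le> 2" using eaf(4) False by linarith
    ultimately have "ea*eb*P \<le> 2*(3*ed)*(2*(a*b))" using pos P0 by (intro mult_mono) auto
    then have x: "X \<le> 12*(a*b*ed)" unfolding X_def by (simp add: algebra_simps)
    have "k^2 \<le> u*(12*A)" using pp_G2 u_def k_def by simp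
    also have "\<dots> \<le> u*(12*(M+1))" using Af(4) False pp_pos u_def by (intro mult_left_mono) auto
    finally have y: "k^2 \<le> u*(12*(M+1))" .
    have "k^2 * X \<le> k^2 * (12*(a*b*ed))" using x by (intro mult_left_mono) auto
    also have "\<dots> \<le> (u*(12*(M+1))) * (12*(a*b*ed))" using y ab0 pos by (intro mult_right_mono) auto
    finally have hX: "k^2 * X \<le> (144*(M+1))*(a*b*ed*u)" by (simp add: algebra_simps)
    have "(k^2/(144*(M+1)))*X \<le> a*b*ed*u" by (rule scale_aux[OF X0 _ hX order.refl]) (use M0 in simp)
    moreover have "min (1/4) (k^2/(144*(M+1))) * X \<le> (k^2/(144*(M+1))) * X"
      using mult_right_mono[OF min.cobounded2 X0] .
    ultimately show ?thesis by (simp add: X_def P_def u_def k_def)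
  qed
qed

lemma pp_Q: "cPP m M * (ea*eb*(a*b-p)) \<le> a*b*ed*(D+A-B)"
proof -
  have X0: "0 \<le> ea*eb*(a*b-p)" using P2 pos by simp
  show ?thesis
  proof (cases "b \<le> a")
    case True
    have "cPP m M \<le> min (m/(3*(2*m+12))) ((k0 m M)^2/(72*KK m M))"
      unfolding cPP_def by (rule min.cobounded1)
    then have "cPP m M * (ea*eb*(a*b-p)) \<le> min (m/(3*(2*m+12))) ((k0 m M)^2/(72*KK m M)) * (ea*eb*(a*b-p))"
      using X0 by (rule mult_right_mono)
    then show ?thesis using pp_Q1[OF True] by linarith
  next
    case False
    have "cPP m M \<le> min (1/4) ((k0 m M)^2/(144*(M+1)))"
      unfolding cPP_def by (rule min.cobounded2)
    then have "cPP m M * (ea*eb*(a*b-p)) \<le> min (1/4) ((k0 m M)^2/(144*(M+1))) * (ea*eb*(a*b-p))"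
      using X0 by (rule mult_right_mono)
    then show ?thesis using pp_Q2 False by linarith
  qed
qed

definition cIP :: "real \<Rightarrow> real \<Rightarrow> real" where
  "cIP m' M' = min (k0 m' M'/3) ((k0 m' M')^2/(12*KK m' M'))"

lemma pp_I: "cIP m M \<le> (D+A-B)*ea" "cIP m M \<le> (D+A-B)*eb" "cIP m M \<le> (D+A-B)*ed"
proof -
  define u where "u = D+A-B"
  define k where "k = k0 m M"
  define K where "K = KK m M"
  have u0: "0 \<le> u" using pp_pos u_def by simp
  have K1: "1 \<le> K" using Kf K_def by auto
  have k0': "0 < k" "k \<le> m" "k \<le> M" using kf k_def by auto
  have "cIP m M \<le> u*ea \<and> cIP m M \<le> u*eb \<and> cIP m M \<le> u*ed"
  proof (cases "b \<le> a")
    case True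
    have k1: "k \<le> min A D" using k0' Af(2) Df(2) by simp
    have m3: "min A D \<le> 3*u" using pp_min[OF True] u_def by simp
    have ku: "k/3 \<le> u" using k1 m3 by linarith
    have "\<And>x. 1 \<le> x \<Longrightarrow> u \<le> u*x" using u0 mult_left_mono[of 1 _ u] by simp
    moreover have "cIP m M \<le> k/3" by (simp add: cIP_def k_def)
    ultimately show ?thesis using ku eaf(2) ebf(2) edf(2) by (meson order_trans)
  next
    case False
    have G: "k^2 \<le> u*(12*A)" "k^2 \<le> u*(12*D)" using pp_G2 u_def k_def by auto
    have AB: "A \<le> B" using AB_mono2 False by simp
    have c: "cIP m M \<le> k^2/(12*KK m M)" unfolding cIP_def k_def by (rule min.cobounded2)
    have gen: "cIP m M \<le> u*x" if h1: "k^2 \<le> u*(12*Y)" and h2: "Y \<le> KK m M*x" for Y x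
    proof -
      have "u*(12*Y) \<le> u*(12*(KK m M*x))" using h2 u0 by (intro mult_left_mono) auto
      then have "k^2 \<le> (12*KK m M)*(u*x)" using h1 by (simp add: algebra_simps)
      then have "k^2/(12*KK m M) \<le> u*x" using Kf by (simp add: pos_divide_le_eq mult.commute)
      then show "cIP m M \<le> u*x" using c by linarith
    qed
    have "u*(12*A) \<le> u*(12*B)" using AB u0 by (intro mult_left_mono) auto
    then have GB: "k^2 \<le> u*(12*B)" using G(1) by linarith
    have "cIP m M \<le> u*ea" by (rule gen[OF G(1) Alh(2)])
    moreover have "cIP m M \<le> u*eb" by (rule gen[OF GB Blh(2)])
    moreover have "cIP m M \<le> u*ed" by (rule gen[OF G(2) Dlh(2)])
    ultimately show ?thesis by blast
  qed
  then show "cIP m M \<le> (D+A-B)*ea" "cIP m M \<le> (D+A-B)*eb" "cIP m M \<le> (D+A-B)*ed"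
    using u_def by auto
qed

end

context R begin

lemma swap: "R m M b a p d B A D eb ea ed"
proof unfold_locales
  show "d^2 = b^2 + a^2 - 2*p" using dsq by simp
  show "\<bar>p\<bar> \<le> b*a" using pab by (simp add: mult.commute)
qed (simp_all add: m0 mM a0 b0 d0 A_def B_def D_def ea_def eb_def ed_def)

definition cMP :: "real \<Rightarrow> real \<Rightarrow> real" where
  "cMP m' M' = min 1 (eps m' M') * k0 m' M' / (48*KK m' M'*(M'+1))"

lemma mp_Q_all:
  assumes "min A B < 2*D" "0 < a" "0 < b"
  shows "cMP m M * (ea*eb*(a*b+p)) \<le> a*b*ed*(A+B-D)"
proof -
  have X0: "0 \<le> ea*eb*(a*b+p)" using pab2 pos by simp
  have q: "0 < 48*KK m M*(M+1)" using Kf M0 by simp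
  have hX: "(min 1 (eps m M) * k0 m M) * (ea*eb*(a*b+p)) \<le> (48*KK m M*(M+1)) * (a*b*ed*(A+B-D))"
  proof (cases "b \<le> a")
    case True
    then have "B \<le> A" using AB_mono by simp
    then have "B < 2*D" using assms by (simp add: min_def split: if_splits)
    then show ?thesis using mp_Q[OF True _ assms(2,3)] by simp
  next
    case False
    interpret sw: R m M b a p d B A D eb ea ed by (rule swap)
    have "A \<le> B" using sw.AB_mono False by simp
    then have "A < 2*D" using assms by (simp add: min_def split: if_splits)
    moreover have "a \<le> b" using False by simp
    ultimately have "min 1 (eps m M) * k0 m M * (eb*ea*(b*a+p)) \<le> 48*KK m M*(M+1) * (b*a*ed*(B+A-D))"
      using sw.mp_Q assms(2,3) by blast
    then show ?thesis by (simp add: algebra_simps)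
  qed
  show ?thesis unfolding cMP_def by (rule scale_aux[OF X0 q hX order.refl])
qed

lemma mp_I_all:
  assumes "min A B < 2*D"
  shows "eps m M/(2*KK m M) \<le> (A+B-D)*ea" "eps m M/(2*KK m M) \<le> (A+B-D)*eb" "eps m M/(2*KK m M) \<le> (A+B-D)*ed"
proof -
  have K: "0 < KK m M" using Kf by simp
  have e: "0 < eps m M" using eps_pos by simp
  have h: "eps m M \<le> (A+B-D) * (2*KK m M*ed)"
  proof (cases "B \<le> A")
    case True
    then show ?thesis using mp_I2 assms by (simp add: min_def split: if_splits)
  next
    case False
    interpret sw: R m M b a p d B A D eb ea ed by (rule swap)
    have "A < 2*D" using assms False by (simp add: min_def split: if_splits)
    then show ?thesis using sw.mp_I2 by (simp add: algebra_simps)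
  qed
  have gen: "eps m M/(2*KK m M) \<le> (A+B-D)*x" if "eps m M \<le> (A+B-D)*(2*KK m M*x)" for x
  proof -
    have "eps m M \<le> ((A+B-D)*x)*(2*KK m M)" using that by (simp add: algebra_simps)
    then show ?thesis using K by (subst pos_divide_le_eq) simp_all
  qed
  show "eps m M/(2*KK m M) \<le> (A+B-D)*ed" using gen h by simp
  have u0: "0 \<le> A+B-D" using D_lt by simp
  have "(A+B-D)*(KK m M*ea) \<le> (A+B-D)*(2*KK m M*ea)" by (rule mult_left_mono) (use K pos u0 in auto)
  then have "eps m M \<le> (A+B-D) * (2*KK m M*ea)" using mp_I1(1) by linarith
  then show "eps m M/(2*KK m M) \<le> (A+B-D)*ea" using gen by simp
  have "(A+B-D)*(KK m M*eb) \<le> (A+B-D)*(2*KK m M*eb)" by (rule mult_left_mono) (use K pos u0 in auto)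
  then have "eps m M \<le> (A+B-D) * (2*KK m M*eb)" using mp_I1(2) by linarith
  then show "eps m M/(2*KK m M) \<le> (A+B-D)*eb" using gen by simp
qed

lemma ed_le: "ed \<le> ea + eb"
proof -
  have "a*b \<le> ea*eb" using mult_mono[OF eaf(3) ebf(3)] pos a0 b0 by simp
  moreover have "d^2 \<le> (a+b)^2" using dtri(3) d0 by (intro power_mono) auto
  ultimately have "ed^2 \<le> (ea+eb)^2" using edf(1) eaf(1) ebf(1)
    by (simp add: power2_eq_square algebra_simps)
  then show ?thesis using power2_le_imp_le pos by (metis add_pos_pos less_le)
qed

end

lemma fin_Q: fixes u C cQ a b ea eb ed P th :: real
  assumes "0 < cQ" "0 < C" "C \<le> cQ/36" "0<a" "0<b" "1\<le>ea" "1\<le>eb" "1\<le>ed" "ed \<le> ea+eb" "0 \<le> P"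
   "th^2*(a*b) \<le> 18*P" "cQ*(ea*eb*P) \<le> a*b*ed*u"
  shows "C*(ea*eb/ed)*th^2 \<le> u" "C*min ea eb*th^2 \<le> u"
proof -
  have ab: "0 < a*b" using assms by simp
  have "cQ*(ea*eb*(th^2*(a*b))) \<le> cQ*(ea*eb*(18*P))"
    using assms by (intro mult_left_mono) auto
  also have "\<dots> = 18*(cQ*(ea*eb*P))" by (simp add: algebra_simps)
  also have "\<dots> \<le> 18*(a*b*ed*u)" using assms by simp
  finally have "(a*b)*(cQ*ea*eb*th^2) \<le> (a*b)*(18*ed*u)" by (simp add: algebra_simps)
  then have h: "cQ*ea*eb*th^2 \<le> 18*ed*u" using ab by (simp add: mult_le_cancel_left_pos)
  have "0 \<le> cQ*(ea*eb*P)" using assms by simp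
  then have "0 \<le> a*b*ed*u" using assms(12) by linarith
  moreover have "0 < a*b*ed" using ab assms by simp
  ultimately have u0: "0 \<le> u"
  proof (rule_tac ccontr)
    assume h1: "0 \<le> a*b*ed*u" and h2: "0 < a*b*ed" and h3: "\<not> 0 \<le> u"
    then have "a*b*ed*u < 0" using mult_pos_neg[OF h2, of u] by simp
    then show False using h1 by simp
  qed
  define Y where "Y = ea*eb/ed*th^2"
  have Y0: "0 \<le> Y" using assms Y_def by simp
  have "cQ*Y = (cQ*ea*eb*th^2)/ed" by (simp add: Y_def)
  also have "\<dots> \<le> 18*u" using h assms by (subst pos_divide_le_eq) (auto simp: algebra_simps)
  finally have cY: "cQ*Y \<le> 18*u" .
  have CY1: "C*Y \<le> (cQ/36)*Y" using assms Y0 by (intro mult_right_mono) auto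
  have CY2: "(cQ/36)*Y = (cQ*Y)/36" by simp
  have CY: "C*Y \<le> u" using CY1 CY2 cY u0 by linarith
  have eqY: "C*(ea*eb/ed)*th^2 = C*Y" unfolding Y_def by (simp add: mult.assoc)
  show "C*(ea*eb/ed)*th^2 \<le> u" using eqY CY by linarith
  have m1: "min ea eb * ed \<le> min ea eb * (ea+eb)" using assms by (intro mult_left_mono) auto
  have m2: "min ea eb * ea \<le> ea*eb" using assms mult_right_mono[of "min ea eb" eb ea] by (simp add: mult.commute)
  have m3: "min ea eb * eb \<le> ea*eb" using assms by (intro mult_right_mono) auto
  have "min ea eb * ed \<le> min ea eb * (ea+eb)" by (rule m1)
  also have "\<dots> = min ea eb * ea + min ea eb * eb" by (simp add: distrib_left)
  also have "\<dots> \<le> ea*eb + ea*eb" by (rule add_mono[OF m2 m3])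
  also have "\<dots> = 2*(ea*eb)" by simp
  finally have "min ea eb * ed \<le> 2*(ea*eb)" .
  then have "min ea eb \<le> 2*(ea*eb)/ed" using assms by (simp add: pos_le_divide_eq)
  then have "min ea eb * th^2 \<le> (2*(ea*eb)/ed)*th^2" by (intro mult_right_mono) auto
  moreover have "(2*(ea*eb)/ed)*th^2 = 2*Y" unfolding Y_def by (simp add: algebra_simps)
  ultimately have "min ea eb * th^2 \<le> 2*Y" by simp
  then have "C*(min ea eb * th^2) \<le> C*(2*Y)" using assms by (intro mult_left_mono) auto
  moreover have "C*(2*Y) \<le> (cQ/36)*(2*Y)" using assms Y0 by (intro mult_right_mono) auto
  moreover have "(cQ/36)*(2*Y) = (cQ*Y)/18" by simp
  moreover have "C*min ea eb*th^2 = C*(min ea eb * th^2)" by (simp add: mult.assoc)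
  ultimately show "C*min ea eb*th^2 \<le> u" using cY by linarith
qed

lemma fin_1a: fixes u C k ea eb ed :: real
  assumes "0<k" "k*ea \<le> u" "k*eb \<le> u" "k*ed \<le> u" "0<C" "C \<le> k" "0 \<le> ea" "0 \<le> eb" "0 \<le> ed"
  shows "C*max ed (max ea eb) \<le> u"
proof -
  have g: "C*x \<le> u" if "0 \<le> x" "k*x \<le> u" for x
  proof -
    have "C*x \<le> k*x" using assms(6) that(1) by (rule mult_right_mono)
    then show ?thesis using that(2) by linarith
  qed
  have "max ed (max ea eb) = ed \<or> max ed (max ea eb) = ea \<or> max ed (max ea eb) = eb"
    by (auto simp: max_def)
  then show ?thesis using g assms by auto
qed

lemma fin_1b: fixes u C k ea eb th :: real
  assumes "0<k" "k*ea \<le> u" "0<C" "C \<le> k/16" "1 \<le> ea" "1 \<le> eb" "th^2 \<le> 16"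
  shows "C*min ea eb*th^2 \<le> u"
proof -
  have "min ea eb * th^2 \<le> ea * 16" using assms by (intro mult_mono) auto
  then have "C*(min ea eb * th^2) \<le> C*(ea*16)" using assms by (intro mult_left_mono) auto
  also have "\<dots> \<le> (k/16)*(ea*16)" using assms by (intro mult_right_mono) auto
  finally show ?thesis using assms by (simp add: mult.assoc)
qed

lemma fin_I: fixes u C cI ea eb ed :: real
  assumes "0<C" "C \<le> cI" "cI \<le> u*ea" "cI \<le> u*eb" "cI \<le> u*ed" "0<ea" "0<eb" "0<ed"
  shows "C*max (inverse ed) (max (inverse ea) (inverse eb)) \<le> u"
proof -
  have g: "\<And>x. 0 < x \<Longrightarrow> cI \<le> u*x \<Longrightarrow> C*inverse x \<le> u"
  proof -
    fix x :: real assume x: "0 < x" "cI \<le> u*x"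
    have "C*inverse x \<le> cI*inverse x" using assms x by (intro mult_right_mono) auto
    also have "\<dots> = cI/x" by (simp add: divide_inverse)
    also have "\<dots> \<le> u" using x by (simp add: pos_divide_le_eq)
    finally show "C*inverse x \<le> u" .
  qed
  show ?thesis using g[OF assms(8,5)] g[OF assms(6,3)] g[OF assms(7,4)] unfolding max_def by auto
qed

lemma vec_R: fixes \<xi>1 \<xi>2 :: "real^3" assumes "0<m" "m<2*M"
  shows "R m M (norm \<xi>1) (norm \<xi>2) (\<xi>1 \<bullet> \<xi>2) (norm(\<xi>1-\<xi>2)) (jb M \<xi>1) (jb M \<xi>2) (jb m (\<xi>1-\<xi>2)) (jb 1 \<xi>1) (jb 1 \<xi>2) (jb 1 (\<xi>1-\<xi>2))"
  by unfold_locales (use assms dot_norm_neg[of \<xi>1 \<xi>2] Cauchy_Schwarz_ineq2[of \<xi>1 \<xi>2] in \<open>auto simp: jb_def\<close>)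

lemma ang: fixes \<xi>1 \<xi>2 :: "real^3" and s1 s2 :: real
  assumes "s1 \<in> {1,-1}" "s2 \<in> {1,-1}" "\<xi>1 \<noteq> 0" "\<xi>2 \<noteq> 0"
  shows "(vangle (s1 *\<^sub>R \<xi>1) (s2 *\<^sub>R \<xi>2))^2 * (norm \<xi>1 * norm \<xi>2) \<le> 18*(norm \<xi>1*norm \<xi>2 - s1 * s2*(\<xi>1 \<bullet> \<xi>2))"
    "(vangle (s1 *\<^sub>R \<xi>1) (s2 *\<^sub>R \<xi>2))^2 \<le> 16"
proof -
  define a where "a = norm \<xi>1"
  define b where "b = norm \<xi>2"
  define p where "p = \<xi>1 \<bullet> \<xi>2"
  have ab: "0 < a*b" using assms a_def b_def by simp
  have s: "\<bar>s1\<bar> = 1" "\<bar>s2\<bar> = 1" using assms by auto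
  define t where "t = s1 * s2*p/(a*b)"
  have v: "vangle (s1 *\<^sub>R \<xi>1) (s2 *\<^sub>R \<xi>2) = arccos t"
    unfolding vangle_def t_def a_def b_def p_def using s by (simp add: mult.assoc mult.left_commute)
  have "\<bar>s1 * s2*p\<bar> = \<bar>p\<bar>" using s by (simp add: abs_mult)
  also have "\<dots> \<le> a*b" using Cauchy_Schwarz_ineq2[of \<xi>1 \<xi>2] a_def b_def p_def by simp
  finally have "\<bar>s1 * s2*p\<bar> \<le> a*b" .
  then have "\<bar>t\<bar> \<le> 1" using ab unfolding t_def by (simp add: abs_divide pos_divide_le_eq)
  then have t1: "-1 \<le> t" "t \<le> 1" by auto
  have "(arccos t)^2 \<le> 18*(1-t)" using arccos_sq_le[OF t1] .
  then have "(arccos t)^2 * (a*b) \<le> 18*(1-t)*(a*b)" using ab by (intro mult_right_mono) auto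
  also have "\<dots> = 18*(a*b - s1 * s2*p)"
  proof -
    have an: "a \<noteq> 0" "b \<noteq> 0" using ab by auto
    then show ?thesis unfolding t_def by (simp add: field_simps)
  qed
  finally show "(vangle (s1 *\<^sub>R \<xi>1) (s2 *\<^sub>R \<xi>2))^2 * (norm \<xi>1 * norm \<xi>2) \<le> 18*(norm \<xi>1*norm \<xi>2 - s1 * s2*(\<xi>1 \<bullet> \<xi>2))"
    using v a_def b_def p_def by simp
  have "0 \<le> arccos t" "arccos t \<le> pi" using arccos_bounded[OF t1] by auto
  then have "(arccos t)^2 \<le> 4^2" using pi_less_4 by (intro power_mono) auto
  then show "(vangle (s1 *\<^sub>R \<xi>1) (s2 *\<^sub>R \<xi>2))^2 \<le> 16" using v by simp
qed


definition Goal :: "real \<Rightarrow> real \<Rightarrow> real \<Rightarrow> real \<Rightarrow> real \<Rightarrow> real \<Rightarrow> real^3 \<Rightarrow> real^3 \<Rightarrow> bool" where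
  "Goal c m M C s1 s2 \<xi>1 \<xi>2 =
     (let \<mu> = \<bar>mu m M s1 s2 \<xi>1 \<xi>2\<bar> in
       ((s1 = 1 \<and> s2 = -1) \<or>
        (s1 = -1 \<and> s2 = 1 \<and> jb m (\<xi>1 - \<xi>2) \<le> c * min (jb M \<xi>1) (jb M \<xi>2))
          \<longrightarrow> \<mu> \<ge> C * max (jb 1 (\<xi>1 - \<xi>2)) (max (jb 1 \<xi>1) (jb 1 \<xi>2))) \<and>
       ((s1 = s2 \<or>
        (s1 = -1 \<and> s2 = 1 \<and> jb m (\<xi>1 - \<xi>2) > c * min (jb M \<xi>1) (jb M \<xi>2)))
          \<longrightarrow> \<xi>1 \<noteq> 0 \<longrightarrow> \<xi>2 \<noteq> 0 \<longrightarrow>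
          \<mu> \<ge> C * (jb 1 \<xi>1 * jb 1 \<xi>2 / jb 1 (\<xi>1 - \<xi>2)) *
                 (vangle (s1 *\<^sub>R \<xi>1) (s2 *\<^sub>R \<xi>2))\<^sup>2) \<and>
       (\<xi>1 \<noteq> 0 \<longrightarrow> \<xi>2 \<noteq> 0 \<longrightarrow>
          \<mu> \<ge> C * min (jb 1 \<xi>1) (jb 1 \<xi>2) * (vangle (s1 *\<^sub>R \<xi>1) (s2 *\<^sub>R \<xi>2))\<^sup>2) \<and>
       \<mu> \<ge> C * max (inverse (jb 1 (\<xi>1 - \<xi>2))) (max (inverse (jb 1 \<xi>1)) (inverse (jb 1 \<xi>2))))"

definition Cfin :: "real \<Rightarrow> real \<Rightarrow> real" where
  "Cfin m M = min (k0 m M/32) (min (eps m M/(2*KK m M)) (min (R.cMP m M/36) (min (R.cPP m M/36) (R.cIP m M))))"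

lemma Cfin_le: "Cfin m M \<le> k0 m M/32" "Cfin m M \<le> eps m M/(2*KK m M)" "Cfin m M \<le> R.cMP m M/36"
  "Cfin m M \<le> R.cPP m M/36" "Cfin m M \<le> R.cIP m M"
  unfolding Cfin_def by auto

lemma Cfin_pos: assumes "0 < m" "m < 2*M" shows "0 < Cfin m M"
proof -
  interpret R m M "norm (0::real^3)" "norm (0::real^3)" "(0::real^3) \<bullet> 0" "norm ((0::real^3)-0)"
    "jb M (0::real^3)" "jb M (0::real^3)" "jb m ((0::real^3)-0)" "jb 1 (0::real^3)" "jb 1 (0::real^3)" "jb 1 ((0::real^3)-0)"
    by (rule vec_R) (use assms in auto)
  have k: "0 < k0 m M" using kf by simp
  have e: "0 < eps m M" using eps_pos by simp
  have K: "0 < KK m M" using Kf by simp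
  have "0 < min 1 (eps m M)" using e by simp
  then have c1: "0 < cMP m M" unfolding cMP_def using k K M0 by simp
  have c2: "0 < cPP m M" unfolding cPP_def using k K M0 m0 by simp
  have c3: "0 < cIP m M" unfolding cIP_def using k K by simp
  show ?thesis unfolding Cfin_def using k e K c1 c2 c3 by simp
qed

context
  fixes m M C :: real and \<xi>1 \<xi>2 :: "real^3"
  assumes m0: "0 < m" and mM: "m < 2*M" and C0: "0 < C" and CC: "C \<le> Cfin m M"
begin

interpretation R m M "norm \<xi>1" "norm \<xi>2" "\<xi>1 \<bullet> \<xi>2" "norm(\<xi>1-\<xi>2)" "jb M \<xi>1" "jb M \<xi>2" "jb m (\<xi>1-\<xi>2)" "jb 1 \<xi>1" "jb 1 \<xi>2" "jb 1 (\<xi>1-\<xi>2)"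
  by (rule vec_R) (use m0 mM in auto)

lemma Ck: "C \<le> k0 m M / 32" "C \<le> eps m M/(2*KK m M)" "C \<le> cMP m M/36" "C \<le> cPP m M/36" "C \<le> cIP m M"
  using order_trans[OF CC Cfin_le(1)] order_trans[OF CC Cfin_le(2)] order_trans[OF CC Cfin_le(3)]
    order_trans[OF CC Cfin_le(4)] order_trans[OF CC Cfin_le(5)] by auto

lemma ab_pos: "\<xi>1 \<noteq> 0 \<Longrightarrow> \<xi>2 \<noteq> 0 \<Longrightarrow> 0 < norm \<xi>1" "\<xi>1 \<noteq> 0 \<Longrightarrow> \<xi>2 \<noteq> 0 \<Longrightarrow> 0 < norm \<xi>2" by auto

lemma case_pm: "Goal (1/2) m M C 1 (-1) \<xi>1 \<xi>2"
proof -
  let ?u = "jb m (\<xi>1-\<xi>2) + jb M \<xi>1 + jb M \<xi>2"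
  have mu: "\<bar>mu m M 1 (-1) \<xi>1 \<xi>2\<bar> = ?u" using pos by (simp add: mu_def)
  have l: "(k0 m M/2)*jb 1 \<xi>1 \<le> ?u" "(k0 m M/2)*jb 1 \<xi>2 \<le> ?u" "(k0 m M/2)*jb 1 (\<xi>1-\<xi>2) \<le> ?u"
    using Alh(1) Blh(1) Dlh(1) pos by auto
  have k: "0 < k0 m M/2" using kf by simp
  have F1: "C * max (jb 1 (\<xi>1 - \<xi>2)) (max (jb 1 \<xi>1) (jb 1 \<xi>2)) \<le> ?u"
    by (rule fin_1a[OF k l(1,2,3) C0]) (use Ck kf eaf(2) ebf(2) edf(2) in auto)
  have F3: "C * min (jb 1 \<xi>1) (jb 1 \<xi>2) * (vangle (1 *\<^sub>R \<xi>1) (-1 *\<^sub>R \<xi>2))\<^sup>2 \<le> ?u"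
    if "\<xi>1 \<noteq> 0" "\<xi>2 \<noteq> 0"
    by (rule fin_1b[OF k l(1) C0 _ eaf(2) ebf(2) ang(2)]) (use Ck that in auto)
  have "(k0 m M/2)*1 \<le> (k0 m M/2)*jb 1 \<xi>1" using eaf(2) k by (intro mult_left_mono) auto
  then have lo: "k0 m M/2 \<le> ?u" using l(1) by linarith
  have u0: "0 \<le> ?u" using lo k by linarith
  have Lx: "k0 m M/2 \<le> ?u * x" if "1 \<le> x" for x
  proof -
    have "?u \<le> ?u*x" using mult_left_mono[of 1 x ?u] that u0 by simp
    then show ?thesis by (rule order_trans[OF lo])
  qed
  have ck: "C \<le> k0 m M/2" using Ck(1) kf by simp
  have F4: "C * max (inverse (jb 1 (\<xi>1 - \<xi>2))) (max (inverse (jb 1 \<xi>1)) (inverse (jb 1 \<xi>2))) \<le> ?u"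
    by (rule fin_I[OF C0 ck Lx[OF eaf(2)] Lx[OF ebf(2)] Lx[OF edf(2)] pos(4,5,6)])
  show ?thesis unfolding Goal_def Let_def mu using F1 F3 F4 by simp
qed

lemma case_mp: "Goal (1/2) m M C (-1) 1 \<xi>1 \<xi>2"
proof -
  let ?A = "jb M \<xi>1" and ?B = "jb M \<xi>2" and ?D = "jb m (\<xi>1-\<xi>2)"
  let ?u = "?A + ?B - ?D"
  have mu: "\<bar>mu m M (-1) 1 \<xi>1 \<xi>2\<bar> = ?u" using D_lt by (simp add: mu_def)
  have k: "0 < k0 m M/2" using kf by simp
  have G1: "C * max (jb 1 (\<xi>1 - \<xi>2)) (max (jb 1 \<xi>1) (jb 1 \<xi>2)) \<le> ?u"
    and G3': "\<xi>1 \<noteq> 0 \<Longrightarrow> \<xi>2 \<noteq> 0 \<Longrightarrow> C * min (jb 1 \<xi>1) (jb 1 \<xi>2) * (vangle ((-1) *\<^sub>R \<xi>1) (1 *\<^sub>R \<xi>2))\<^sup>2 \<le> ?u"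
    and G4': "C * max (inverse (jb 1 (\<xi>1 - \<xi>2))) (max (inverse (jb 1 \<xi>1)) (inverse (jb 1 \<xi>2))) \<le> ?u"
    if h: "?D \<le> 1/2 * min ?A ?B"
  proof -
    have "?D \<le> ?A/2" "?D \<le> ?B/2" using h by auto
    then have u: "?A \<le> ?u" "?B \<le> ?u" "?D \<le> ?u" using pos by auto
    have l: "(k0 m M/2)*jb 1 \<xi>1 \<le> ?u" "(k0 m M/2)*jb 1 \<xi>2 \<le> ?u" "(k0 m M/2)*jb 1 (\<xi>1-\<xi>2) \<le> ?u"
      using Alh(1) Blh(1) Dlh(1) u by auto
    show "C * max (jb 1 (\<xi>1 - \<xi>2)) (max (jb 1 \<xi>1) (jb 1 \<xi>2)) \<le> ?u"
      by (rule fin_1a[OF k l(1,2,3) C0]) (use Ck kf eaf(2) ebf(2) edf(2) in auto)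
    show "\<xi>1 \<noteq> 0 \<Longrightarrow> \<xi>2 \<noteq> 0 \<Longrightarrow> C * min (jb 1 \<xi>1) (jb 1 \<xi>2) * (vangle ((-1) *\<^sub>R \<xi>1) (1 *\<^sub>R \<xi>2))\<^sup>2 \<le> ?u"
      by (rule fin_1b[OF k l(1) C0 _ eaf(2) ebf(2) ang(2)]) (use Ck in auto)
    have "(k0 m M/2)*1 \<le> (k0 m M/2)*jb 1 \<xi>1" using eaf(2) k by (intro mult_left_mono) auto
    then have lo: "k0 m M/2 \<le> ?u" using l(1) by linarith
    have u0: "0 \<le> ?u" using lo k by linarith
    have Lx: "k0 m M/2 \<le> ?u * x" if "1 \<le> x" for x
    proof -
      have "?u \<le> ?u*x" using mult_left_mono[of 1 x ?u] that u0 by simp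
      then show ?thesis by (rule order_trans[OF lo])
    qed
    have ck: "C \<le> k0 m M/2" using Ck(1) kf by simp
    show "C * max (inverse (jb 1 (\<xi>1 - \<xi>2))) (max (inverse (jb 1 \<xi>1)) (inverse (jb 1 \<xi>2))) \<le> ?u"
      by (rule fin_I[OF C0 ck Lx[OF eaf(2)] Lx[OF ebf(2)] Lx[OF edf(2)] pos(4,5,6)])
  qed
  have G2: "C * (jb 1 \<xi>1 * jb 1 \<xi>2 / jb 1 (\<xi>1 - \<xi>2)) * (vangle ((-1) *\<^sub>R \<xi>1) (1 *\<^sub>R \<xi>2))\<^sup>2 \<le> ?u"
    and G3: "C * min (jb 1 \<xi>1) (jb 1 \<xi>2) * (vangle ((-1) *\<^sub>R \<xi>1) (1 *\<^sub>R \<xi>2))\<^sup>2 \<le> ?u"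
    if h: "1/2 * min ?A ?B < ?D" and n: "\<xi>1 \<noteq> 0" "\<xi>2 \<noteq> 0"
  proof -
    have h2: "min ?A ?B < 2 * ?D" using h by simp
    have a: "0 < norm \<xi>1" "0 < norm \<xi>2" using n by auto
    have th: "(vangle ((-1) *\<^sub>R \<xi>1) (1 *\<^sub>R \<xi>2))\<^sup>2 * (norm \<xi>1 * norm \<xi>2) \<le> 18 * (norm \<xi>1 * norm \<xi>2 + \<xi>1 \<bullet> \<xi>2)"
      using ang(1)[of "-1" 1 \<xi>1 \<xi>2] n by simp
    have cM: "0 < cMP m M" unfolding cMP_def using kf Kf M0 eps_pos by simp
    note Q = mp_Q_all[OF h2 a]
    show "C * (jb 1 \<xi>1 * jb 1 \<xi>2 / jb 1 (\<xi>1 - \<xi>2)) * (vangle ((-1) *\<^sub>R \<xi>1) (1 *\<^sub>R \<xi>2))\<^sup>2 \<le> ?u"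
      by (rule fin_Q(1)[OF cM C0 Ck(3) a eaf(2) ebf(2) edf(2) ed_le _ th Q]) (use pab2 in simp)
    show "C * min (jb 1 \<xi>1) (jb 1 \<xi>2) * (vangle ((-1) *\<^sub>R \<xi>1) (1 *\<^sub>R \<xi>2))\<^sup>2 \<le> ?u"
      by (rule fin_Q(2)[OF cM C0 Ck(3) a eaf(2) ebf(2) edf(2) ed_le _ th Q]) (use pab2 in simp)
  qed
  have G4: "C * max (inverse (jb 1 (\<xi>1 - \<xi>2))) (max (inverse (jb 1 \<xi>1)) (inverse (jb 1 \<xi>2))) \<le> ?u"
    if h: "1/2 * min ?A ?B < ?D"
  proof -
    have h2: "min ?A ?B < 2 * ?D" using h by simp
    note I = mp_I_all[OF h2]
    show ?thesis by (rule fin_I[OF C0 Ck(2) I pos(4,5,6)])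
  qed
  have G3all: "\<xi>1 \<noteq> 0 \<Longrightarrow> \<xi>2 \<noteq> 0 \<Longrightarrow> C * min (jb 1 \<xi>1) (jb 1 \<xi>2) * (vangle ((-1) *\<^sub>R \<xi>1) (1 *\<^sub>R \<xi>2))\<^sup>2 \<le> ?u"
    using G3 G3' by (cases "?D \<le> 1/2 * min ?A ?B") auto
  have G4all: "C * max (inverse (jb 1 (\<xi>1 - \<xi>2))) (max (inverse (jb 1 \<xi>1)) (inverse (jb 1 \<xi>2))) \<le> ?u"
    using G4 G4' by (cases "?D \<le> 1/2 * min ?A ?B") auto
  show ?thesis unfolding Goal_def Let_def mu
    using G1 G2 G3all G4all by auto
qed

lemma case_pp: "Goal (1/2) m M C 1 1 \<xi>1 \<xi>2"
proof -
  let ?A = "jb M \<xi>1" and ?B = "jb M \<xi>2" and ?D = "jb m (\<xi>1-\<xi>2)"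
  let ?u = "?D + ?A - ?B"
  have mu: "\<bar>mu m M 1 1 \<xi>1 \<xi>2\<bar> = ?u" using pp_pos by (simp add: mu_def)
  have G2: "C * (jb 1 \<xi>1 * jb 1 \<xi>2 / jb 1 (\<xi>1 - \<xi>2)) * (vangle (1 *\<^sub>R \<xi>1) (1 *\<^sub>R \<xi>2))\<^sup>2 \<le> ?u"
    and G3: "C * min (jb 1 \<xi>1) (jb 1 \<xi>2) * (vangle (1 *\<^sub>R \<xi>1) (1 *\<^sub>R \<xi>2))\<^sup>2 \<le> ?u"
    if n: "\<xi>1 \<noteq> 0" "\<xi>2 \<noteq> 0"
  proof -
    have a: "0 < norm \<xi>1" "0 < norm \<xi>2" using n by auto
    have th: "(vangle (1 *\<^sub>R \<xi>1) (1 *\<^sub>R \<xi>2))\<^sup>2 * (norm \<xi>1 * norm \<xi>2) \<le> 18 * (norm \<xi>1 * norm \<xi>2 - \<xi>1 \<bullet> \<xi>2)"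
      using ang(1)[of 1 1 \<xi>1 \<xi>2] n by simp
    have cP: "0 < cPP m M" unfolding cPP_def using kf Kf M0 m0 by simp
    note Q = pp_Q
    show "C * (jb 1 \<xi>1 * jb 1 \<xi>2 / jb 1 (\<xi>1 - \<xi>2)) * (vangle (1 *\<^sub>R \<xi>1) (1 *\<^sub>R \<xi>2))\<^sup>2 \<le> ?u"
      by (rule fin_Q(1)[OF cP C0 Ck(4) a eaf(2) ebf(2) edf(2) ed_le _ th Q]) (use pab2 in simp)
    show "C * min (jb 1 \<xi>1) (jb 1 \<xi>2) * (vangle (1 *\<^sub>R \<xi>1) (1 *\<^sub>R \<xi>2))\<^sup>2 \<le> ?u"
      by (rule fin_Q(2)[OF cP C0 Ck(4) a eaf(2) ebf(2) edf(2) ed_le _ th Q]) (use pab2 in simp)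
  qed
  have G4: "C * max (inverse (jb 1 (\<xi>1 - \<xi>2))) (max (inverse (jb 1 \<xi>1)) (inverse (jb 1 \<xi>2))) \<le> ?u"
    by (rule fin_I[OF C0 Ck(5) pp_I pos(4,5,6)])
  show ?thesis unfolding Goal_def Let_def mu
    using G2 G3 G4 by auto
qed

lemma case_mm: "Goal (1/2) m M C (-1) (-1) \<xi>1 \<xi>2"
proof -
  interpret sw: R m M "norm \<xi>2" "norm \<xi>1" "\<xi>1 \<bullet> \<xi>2" "norm(\<xi>1-\<xi>2)" "jb M \<xi>2" "jb M \<xi>1" "jb m (\<xi>1-\<xi>2)" "jb 1 \<xi>2" "jb 1 \<xi>1" "jb 1 (\<xi>1-\<xi>2)"
    by (rule swap)
  let ?A = "jb M \<xi>1" and ?B = "jb M \<xi>2" and ?D = "jb m (\<xi>1-\<xi>2)"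
  let ?u = "?D + ?B - ?A"
  have mu: "\<bar>mu m M (-1) (-1) \<xi>1 \<xi>2\<bar> = ?u" using sw.pp_pos by (simp add: mu_def)
  have G2: "C * (jb 1 \<xi>1 * jb 1 \<xi>2 / jb 1 (\<xi>1 - \<xi>2)) * (vangle ((-1) *\<^sub>R \<xi>1) ((-1) *\<^sub>R \<xi>2))\<^sup>2 \<le> ?u"
    and G3: "C * min (jb 1 \<xi>1) (jb 1 \<xi>2) * (vangle ((-1) *\<^sub>R \<xi>1) ((-1) *\<^sub>R \<xi>2))\<^sup>2 \<le> ?u"
    if n: "\<xi>1 \<noteq> 0" "\<xi>2 \<noteq> 0"
  proof -
    have a: "0 < norm \<xi>1" "0 < norm \<xi>2" using n by auto
    have th: "(vangle ((-1) *\<^sub>R \<xi>1) ((-1) *\<^sub>R \<xi>2))\<^sup>2 * (norm \<xi>1 * norm \<xi>2) \<le> 18 * (norm \<xi>1 * norm \<xi>2 - \<xi>1 \<bullet> \<xi>2)"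
      using ang(1)[of "-1" "-1" \<xi>1 \<xi>2] n by simp
    have cP: "0 < cPP m M" unfolding cPP_def using kf Kf M0 m0 by simp
    have Q: "cPP m M * (jb 1 \<xi>1 * jb 1 \<xi>2 * (norm \<xi>1 * norm \<xi>2 - \<xi>1 \<bullet> \<xi>2)) \<le> norm \<xi>1 * norm \<xi>2 * jb 1 (\<xi>1-\<xi>2) * ?u"
      using sw.pp_Q by (simp add: algebra_simps)
    show "C * (jb 1 \<xi>1 * jb 1 \<xi>2 / jb 1 (\<xi>1 - \<xi>2)) * (vangle ((-1) *\<^sub>R \<xi>1) ((-1) *\<^sub>R \<xi>2))\<^sup>2 \<le> ?u"
      by (rule fin_Q(1)[OF cP C0 Ck(4) a eaf(2) ebf(2) edf(2) ed_le _ th Q]) (use pab2 in simp)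
    show "C * min (jb 1 \<xi>1) (jb 1 \<xi>2) * (vangle ((-1) *\<^sub>R \<xi>1) ((-1) *\<^sub>R \<xi>2))\<^sup>2 \<le> ?u"
      by (rule fin_Q(2)[OF cP C0 Ck(4) a eaf(2) ebf(2) edf(2) ed_le _ th Q]) (use pab2 in simp)
  qed
  have G4: "C * max (inverse (jb 1 (\<xi>1 - \<xi>2))) (max (inverse (jb 1 \<xi>1)) (inverse (jb 1 \<xi>2))) \<le> ?u"
    by (rule fin_I[OF C0 Ck(5) sw.pp_I(2,1,3) pos(4,5,6)])
  show ?thesis unfolding Goal_def Let_def mu
    using G2 G3 G4 by auto
qed

end

theorem lemma2p2:
  "\<exists>c>0. \<forall>m M. 0 < m \<and> m < 2 * M \<longrightarrow> (\<exists>C>0. \<forall>s1 s2 \<xi>1 \<xi>2.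
     s1 \<in> {1, -1} \<and> s2 \<in> {1, -1} \<longrightarrow>
     (let \<mu> = \<bar>mu m M s1 s2 \<xi>1 \<xi>2\<bar> in
       ((s1 = 1 \<and> s2 = -1) \<or>
        (s1 = -1 \<and> s2 = 1 \<and> jb m (\<xi>1 - \<xi>2) \<le> c * min (jb M \<xi>1) (jb M \<xi>2))
          \<longrightarrow> \<mu> \<ge> C * max (jb 1 (\<xi>1 - \<xi>2)) (max (jb 1 \<xi>1) (jb 1 \<xi>2))) \<and>
       ((s1 = s2 \<or>
        (s1 = -1 \<and> s2 = 1 \<and> jb m (\<xi>1 - \<xi>2) > c * min (jb M \<xi>1) (jb M \<xi>2)))
          \<longrightarrow> \<xi>1 \<noteq> 0 \<longrightarrow> \<xi>2 \<noteq> 0 \<longrightarrow>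
          \<mu> \<ge> C * (jb 1 \<xi>1 * jb 1 \<xi>2 / jb 1 (\<xi>1 - \<xi>2)) *
                 (vangle (s1 *\<^sub>R \<xi>1) (s2 *\<^sub>R \<xi>2))\<^sup>2) \<and>
       (\<xi>1 \<noteq> 0 \<longrightarrow> \<xi>2 \<noteq> 0 \<longrightarrow>
          \<mu> \<ge> C * min (jb 1 \<xi>1) (jb 1 \<xi>2) * (vangle (s1 *\<^sub>R \<xi>1) (s2 *\<^sub>R \<xi>2))\<^sup>2) \<and>
       \<mu> \<ge> C * max (inverse (jb 1 (\<xi>1 - \<xi>2))) (max (inverse (jb 1 \<xi>1)) (inverse (jb 1 \<xi>2)))))"
proof -
  have H: "\<forall>m M. 0 < m \<and> m < 2 * M \<longrightarrow> (\<exists>C>0. \<forall>s1 s2 \<xi>1 \<xi>2.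
     s1 \<in> {1, -1} \<and> s2 \<in> {1, -1} \<longrightarrow> Goal (1/2) m M C s1 s2 \<xi>1 \<xi>2)"
  proof (intro allI impI)
    fix m M :: real assume h: "0 < m \<and> m < 2 * M"
    show "\<exists>C>0. \<forall>s1 s2 \<xi>1 \<xi>2. s1 \<in> {1, -1} \<and> s2 \<in> {1, -1} \<longrightarrow> Goal (1/2) m M C s1 s2 \<xi>1 \<xi>2"
    proof (intro exI[of _ "Cfin m M"] conjI allI impI)
      show "0 < Cfin m M" using Cfin_pos h by auto
      fix s1 s2 :: real and \<xi>1 \<xi>2 :: "real^3" assume s: "s1 \<in> {1, -1} \<and> s2 \<in> {1, -1}"
      have hh: "0 < m" "m < 2*M" "0 < Cfin m M" "Cfin m M \<le> Cfin m M" using h Cfin_pos by auto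
      from s consider "s1 = 1" "s2 = 1" | "s1 = 1" "s2 = -1" | "s1 = -1" "s2 = 1" | "s1 = -1" "s2 = -1"
        by auto
      then show "Goal (1/2) m M (Cfin m M) s1 s2 \<xi>1 \<xi>2"
      proof cases
        case 1 then show ?thesis using case_pp[OF hh] by simp
      next
        case 2 then show ?thesis using case_pm[OF hh] by simp
      next
        case 3 then show ?thesis using case_mp[OF hh] by simp
      next
        case 4 then show ?thesis using case_mm[OF hh] by simp
      qed
    qed
  qed
  show ?thesis by (intro exI[of _ "1/2"] conjI) (simp, rule H[unfolded Goal_def])
qed


end
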